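(* Let $N,M$ be positive integers, let $\mathscr{A}\subset\mathscr{M}(N,M)$ and $\mathscr{B}\subset\mathscr{M}(M,N)$ be finite sets of real matrices, and let $\|\cdot\|$ be a submultiplicative norm on $\mathscr{M}(N,N)$. Suppose that for every sequence $\{A_n\}_{n\ge1}$ with $A_n\in\mathscr{A}$ there exist a positive integer $k$ and matrices $B_1,\ldots,B_k\in\mathscr{B}$ such that $\|A_kB_k\cdots A_1B_1\|<1$. Then there exist constants $C>0$ and $\lambda\in(0,1)$ such that for every sequence $\{A_n\in\mathscr{A}\}$ there is a sequence $\{B_n\in\mathscr{B}\}$ for which \[ \|A_nB_n\cdots A_1B_1\|\le C\lambda^n,\qquad n=1,2,\ldots. \]
   Context: $\mathscr{M}(p,q)$ denotes the space of $p\times q$ real matrices with the topology of elementwise convergence. A norm on $\mathscr{M}(N,N)$ is submultiplicative if $\|XY\|\le\|X\|\,\|Y\|$ for all $X,Y$. *)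

theory Defs
  imports "HOL-Analysis.Analysis"
begin

definition is_matrix_norm :: "(real^'n^'n \<Rightarrow> real) \<Rightarrow> bool" where
  "is_matrix_norm nrm \<longleftrightarrow>
     (\<forall>X. 0 \<le> nrm X) \<and>
     (\<forall>X. nrm X = 0 \<longleftrightarrow> X = 0) \<and>
     (\<forall>c X. nrm (c *\<^sub>R X) = \<bar>c\<bar> * nrm X) \<and>
     (\<forall>X Y. nrm (X + Y) \<le> nrm X + nrm Y)"

definition submultiplicative :: "(real^'n^'n \<Rightarrow> real) \<Rightarrow> bool" where
  "submultiplicative nrm \<longleftrightarrow> (\<forall>X Y. nrm (X ** Y) \<le> nrm X * nrm Y)"

text \<open>prodAB A B k = A_k B_k ... A_1 B_1 (sequences indexed from 1; empty product = identity).\<close>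
fun prodAB :: "(nat \<Rightarrow> real^'m^'n) \<Rightarrow> (nat \<Rightarrow> real^'n^'m) \<Rightarrow> nat \<Rightarrow> real^'n^'n" where
  "prodAB A B 0 = mat 1"
| "prodAB A B (Suc k) = (A (Suc k) ** B (Suc k)) ** prodAB A B k"

end

theory Submission
  imports Defs
begin

lemma prodAB_cong:
  "(\<forall>i\<in>{1..k}. A i = A' i \<and> B i = B' i) \<Longrightarrow> prodAB A B k = prodAB A' B' k"
  by (induction k) auto

lemma prodAB_add:
  "prodAB A B (p + k) = prodAB (\<lambda>i. A (p+i)) (\<lambda>i. B (p+i)) k ** prodAB A B p"
  by (induction k) (simp_all add: matrix_mul_assoc)

lemma prodAB_finite:
  assumes "finite SA" "finite SB"
  shows "finite {prodAB A B k | A B. \<forall>i\<in>{1..k}. A i \<in> SA \<and> B i \<in> SB}"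
proof (induction k)
  case 0
  have "{prodAB A B 0 | A B. \<forall>i\<in>{1..0::nat}. A i \<in> SA \<and> B i \<in> SB} \<subseteq> {mat 1}" by auto
  then show ?case using finite_subset by blast
next
  case (Suc k)
  let ?P = "{prodAB A B k | A B. \<forall>i\<in>{1..k}. A i \<in> SA \<and> B i \<in> SB}"
  have "{prodAB A B (Suc k) | A B. \<forall>i\<in>{1..Suc k}. A i \<in> SA \<and> B i \<in> SB}
     \<subseteq> (\<lambda>(a,b,p). (a ** b) ** p) ` (SA \<times> SB \<times> ?P)"
  proof
    fix x assume "x \<in> {prodAB A B (Suc k) | A B. \<forall>i\<in>{1..Suc k}. A i \<in> SA \<and> B i \<in> SB}"
    then obtain A B where AB: "\<forall>i\<in>{1..Suc k}. A i \<in> SA \<and> B i \<in> SB" "x = prodAB A B (Suc k)" by blast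
    have "prodAB A B k \<in> ?P" using AB(1) by fastforce
    moreover have "A (Suc k) \<in> SA" "B (Suc k) \<in> SB" using AB(1) by auto
    ultimately show "x \<in> (\<lambda>(a,b,p). (a ** b) ** p) ` (SA \<times> SB \<times> ?P)"
      using AB(2) by force
  qed
  moreover have "finite ((\<lambda>(a,b,p). (a ** b) ** p) ` (SA \<times> SB \<times> ?P))"
    using Suc.IH assms by simp
  ultimately show ?case using finite_subset by blast
qed

lemma koenig:
  fixes S :: "'a set" and G :: "(nat \<Rightarrow> 'a) \<Rightarrow> nat \<Rightarrow> bool"
  assumes fin: "finite S"
  and loc: "\<And>A A' k. (\<forall>i\<in>{1..k}. A i = A' i) \<Longrightarrow> G A k \<Longrightarrow> G A' k"
  and hyp: "\<And>A. (\<forall>n\<ge>1. A n \<in> S) \<Longrightarrow> \<exists>k\<ge>1. G A k"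
  shows "\<exists>K. \<forall>A. (\<forall>n\<ge>1. A n \<in> S) \<longrightarrow> (\<exists>k\<in>{1..K}. G A k)"
proof (rule ccontr)
  assume "\<not> ?thesis"
  then have "\<forall>K. \<exists>A. (\<forall>n\<ge>1. A n \<in> S) \<and> (\<forall>k\<in>{1..K}. \<not> G A k)" by blast
  then obtain AK where AK: "\<And>K. (\<forall>n\<ge>1. AK K n \<in> S) \<and> (\<forall>k\<in>{1..K}. \<not> G (AK K) k)" by metis
  define I where "I w n = {K. \<forall>i\<in>{1..n}. AK K i = w i}" for w and n :: nat
  define step where "step n w = w(Suc n := (SOME a. a \<in> S \<and> infinite {K \<in> I w n. AK K (Suc n) = a}))" for n w
  define W where "W = rec_nat (AK 0) step"
  have WS: "W (Suc n) = step n (W n)" for n by (simp add: W_def)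
  have inf: "infinite (I (W n) n)" for n
  proof (induction n)
    case 0 show ?case by (simp add: I_def)
  next
    case (Suc n)
    let ?X = "I (W n) n"
    have "?X \<subseteq> (\<Union>a\<in>S. {K \<in> ?X. AK K (Suc n) = a})" using AK by auto
    then have "\<exists>a\<in>S. infinite {K \<in> ?X. AK K (Suc n) = a}" using Suc.IH fin
      by (meson finite_UN_I finite_subset)
    then have ex: "\<exists>a. a\<in>S \<and> infinite {K \<in> ?X. AK K (Suc n) = a}" by blast
    define a where "a = (SOME a. a \<in> S \<and> infinite {K \<in> ?X. AK K (Suc n) = a})"
    have a: "a \<in> S \<and> infinite {K \<in> ?X. AK K (Suc n) = a}" using someI_ex[OF ex] a_def by simp
    have "I (W (Suc n)) (Suc n) = {K \<in> ?X. AK K (Suc n) = a}"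
      unfolding WS step_def a_def[symmetric] unfolding I_def
    proof (intro set_eqI iffI)
      fix K assume "K \<in> {K. \<forall>i\<in>{1..Suc n}. AK K i = ((W n)(Suc n := a)) i}"
      then have h: "\<forall>i\<in>{1..Suc n}. AK K i = ((W n)(Suc n := a)) i" by simp
      have "AK K (Suc n) = a" using h[rule_format, of "Suc n"] by simp
      moreover have "\<forall>i\<in>{1..n}. AK K i = W n i" using h by auto
      ultimately show "K \<in> {K \<in> {K. \<forall>i\<in>{1..n}. AK K i = W n i}. AK K (Suc n) = a}" by simp
    next
      fix K assume "K \<in> {K \<in> {K. \<forall>i\<in>{1..n}. AK K i = W n i}. AK K (Suc n) = a}"
      then have h1: "\<forall>i\<in>{1..n}. AK K i = W n i" and h2: "AK K (Suc n) = a" by simp_all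
      have "AK K i = ((W n)(Suc n := a)) i" if "i \<in> {1..Suc n}" for i
      proof (cases "i = Suc n")
        case True then show ?thesis using h2 by simp
      next
        case False then have "i \<in> {1..n}" using that by auto
        then show ?thesis using h1 False by simp
      qed
      then show "K \<in> {K. \<forall>i\<in>{1..Suc n}. AK K i = ((W n)(Suc n := a)) i}" by blast
    qed
    then show ?case using a by simp
  qed
  have Wstab: "W m i = W i i" if "i \<le> m" for i m
    using that
  proof (induction m)
    case 0 then show ?case by simp
  next
    case (Suc m) show ?case
    proof (cases "i = Suc m")
      case True then show ?thesis by simp
    next
      case False then have "i \<le> m" using Suc.prems by simp
      then show ?thesis using Suc.IH False by (simp add: WS step_def)
    qed
  qed
  define A where "A i = W i i" for i
  have Wval: "W n i \<in> S" if "1 \<le> i" "i \<le> n" for n i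
  proof -
    from inf[of n] obtain K where "K \<in> I (W n) n" by (metis finite.emptyI ex_in_conv)
    then have "AK K i = W n i" using that unfolding I_def by simp
    moreover have "AK K i \<in> S" using AK[of K] that(1) by blast
    ultimately show ?thesis by simp
  qed
  have Aval: "\<forall>n\<ge>1. A n \<in> S" using Wval by (simp add: A_def)
  then obtain k where k: "k \<ge> 1" "G A k" using hyp by blast
  have "infinite (I (W k) k)" by (rule inf)
  then obtain K where K: "K \<in> I (W k) k" "K \<ge> k"
    unfolding infinite_nat_iff_unbounded_le by blast
  have "A i = AK K i" if "i \<in> {1..k}" for i
  proof -
    have "AK K i = W k i" using K(1) that unfolding I_def by blast
    moreover have "W k i = W i i" using that by (intro Wstab) simp
    ultimately show ?thesis unfolding A_def by simp
  qed
  then have "G (AK K) k" using loc k(2) by blast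
  moreover have "k \<in> {1..K}" using K k by simp
  ultimately show False using AK[of K] by blast
qed

fun posf :: "((nat \<Rightarrow> 'a) \<Rightarrow> nat) \<Rightarrow> (nat \<Rightarrow> 'a) \<Rightarrow> nat \<Rightarrow> nat" where
  "posf kf A 0 = 0"
| "posf kf A (Suc j) = posf kf A j + kf (\<lambda>i. A (posf kf A j + i))"

theorem theorem3:
  fixes \<A> :: "(real^'m^'n) set" and \<B> :: "(real^'n^'m) set"
    and nrm :: "real^'n^'n \<Rightarrow> real"
  assumes "finite \<A>" and "finite \<B>"
    and "is_matrix_norm nrm" and "submultiplicative nrm"
    and "\<forall>A. (\<forall>n\<ge>1. A n \<in> \<A>) \<longrightarrow>
           (\<exists>k\<ge>1. \<exists>B. (\<forall>i\<in>{1..k}. B i \<in> \<B>) \<and> nrm (prodAB A B k) < 1)"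
  shows "\<exists>C>0. \<exists>lam. 0 < lam \<and> lam < 1 \<and>
           (\<forall>A. (\<forall>n\<ge>1. A n \<in> \<A>) \<longrightarrow>
              (\<exists>B. (\<forall>n\<ge>1. B n \<in> \<B>) \<and> (\<forall>n\<ge>1. nrm (prodAB A B n) \<le> C * lam ^ n)))"
proof -
  define G where "G A k = (\<exists>B. (\<forall>i\<in>{1..k}. B i \<in> \<B>) \<and> nrm (prodAB A B k) < 1)"
    for A :: "nat \<Rightarrow> real^'m^'n" and k
  have loc: "G A' k" if h: "\<forall>i\<in>{1..k}. A i = A' i" and g: "G A k" for A A' k
  proof -
    from g obtain B where B: "\<forall>i\<in>{1..k}. B i \<in> \<B>" "nrm (prodAB A B k) < 1"
      unfolding G_def by blast
    have "prodAB A' B k = prodAB A B k" using h by (intro prodAB_cong) auto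
    then show ?thesis using B unfolding G_def by auto
  qed
  have hyp: "\<exists>k\<ge>1. G A k" if "\<forall>n\<ge>1. A n \<in> \<A>" for A
    using assms(5) that unfolding G_def by blast
  obtain K0 where K0: "\<forall>A. (\<forall>n\<ge>1. A n \<in> \<A>) \<longrightarrow> (\<exists>k\<in>{1..K0}. G A k)"
    using koenig[OF assms(1), of G] loc hyp by blast
  define K where "K = Suc K0"
  have Kpos: "0 < K" unfolding K_def by simp
  have K: "\<forall>A. (\<forall>n\<ge>1. A n \<in> \<A>) \<longrightarrow> (\<exists>k\<in>{1..K}. G A k)"
  proof (intro allI impI)
    fix A :: "nat \<Rightarrow> real^'m^'n" assume "\<forall>n\<ge>1. A n \<in> \<A>"
    then obtain k where "k \<in> {1..K0}" "G A k" using K0 by blast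
    then show "\<exists>k\<in>{1..K}. G A k" unfolding K_def by (intro bexI[of _ k]) auto
  qed
  define P where "P k = {prodAB A B k | A B. \<forall>i\<in>{1..k}. A i \<in> \<A> \<and> B i \<in> \<B>}" for k
  define PP where "PP = (\<Union>k\<in>{..K}. P k)"
  have finPP: "finite PP" unfolding PP_def P_def using prodAB_finite[OF assms(1,2)] by blast
  have inPP: "prodAB A B k \<in> PP" if "k \<le> K" "\<forall>i\<in>{1..k}. A i \<in> \<A> \<and> B i \<in> \<B>" for A B k
    unfolding PP_def P_def using that by blast
  define Q where "Q = insert (1/2) {x \<in> nrm ` PP. x < 1}"
  define q0 where "q0 = Max Q"
  have finQ: "finite Q" using finPP unfolding Q_def by simp
  have q0ge: "1/2 \<le> q0" unfolding q0_def using finQ by (intro Max_ge) (auto simp: Q_def)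
  have q0lt: "q0 < 1" unfolding q0_def using finQ by (subst Max_less_iff) (auto simp: Q_def)
  have q0ub: "x \<le> q0" if "x \<in> nrm ` PP" "x < 1" for x
    unfolding q0_def using finQ that by (intro Max_ge) (auto simp: Q_def)
  have q0pos: "0 < q0" using q0ge by simp
  define D where "D = Max (insert 1 (nrm ` PP))"
  have D1: "1 \<le> D" unfolding D_def using finPP by (intro Max_ge) auto
  have Dub: "nrm X \<le> D" if "X \<in> PP" for X unfolding D_def using finPP that by (intro Max_ge) auto
  have good: "\<forall>A. \<exists>p. (\<forall>n\<ge>1. A n \<in> \<A>) \<longrightarrow> fst p \<in> {1..K} \<and> (\<forall>i\<in>{1..fst p}. snd p i \<in> \<B>)
      \<and> nrm (prodAB A (snd p) (fst p)) \<le> q0"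
  proof
    fix A :: "nat \<Rightarrow> real^'m^'n"
    show "\<exists>p. (\<forall>n\<ge>1. A n \<in> \<A>) \<longrightarrow> fst p \<in> {1..K} \<and> (\<forall>i\<in>{1..fst p}. snd p i \<in> \<B>)
      \<and> nrm (prodAB A (snd p) (fst p)) \<le> q0"
    proof (cases "\<forall>n\<ge>1. A n \<in> \<A>")
      case True
      then obtain k B where k: "k\<in>{1..K}" "\<forall>i\<in>{1..k}. B i \<in> \<B>" "nrm (prodAB A B k) < 1"
        using K unfolding G_def by blast
      have "prodAB A B k \<in> PP" using k True by (intro inPP) auto
      then have "nrm (prodAB A B k) \<le> q0" using q0ub k(3) by blast
      then show ?thesis using k by (intro exI[of _ "(k,B)"]) auto
    qed auto
  qed
  then obtain f where f: "\<And>A. (\<forall>n\<ge>1. A n \<in> \<A>) \<Longrightarrow> fst (f A) \<in> {1..K} \<and> (\<forall>i\<in>{1..fst (f A)}. snd (f A) i \<in> \<B>)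
      \<and> nrm (prodAB A (snd (f A)) (fst (f A))) \<le> q0"
    by metis
  define kf where "kf A = fst (f A)" for A
  define Bf where "Bf A = snd (f A)" for A
  have nm: "\<forall>X. 0 \<le> nrm X" "\<forall>X. nrm X = 0 \<longleftrightarrow> X = 0"
    using assms(3) unfolding is_matrix_norm_def by auto
  have sub: "nrm (X ** Y) \<le> nrm X * nrm Y" for X Y
    using assms(4) unfolding submultiplicative_def by blast
  have mat1: "(mat 1 :: real^'n^'n) \<noteq> 0"
  proof
    assume "(mat 1 :: real^'n^'n) = 0"
    then have "(mat 1 :: real^'n^'n) $ undefined $ undefined = (0::real^'n^'n) $ undefined $ undefined"
      by simp
    then show False by (simp add: mat_def)
  qed
  define c1 where "c1 = nrm (mat 1 :: real^'n^'n)"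
  have c1pos: "0 < c1" using nm mat1 unfolding c1_def by (metis less_eq_real_def)
  define lam where "lam = root K q0"
  have lampos: "0 < lam" unfolding lam_def using Kpos q0pos by (simp add: real_root_gt_zero)
  have lamlt: "lam < 1" unfolding lam_def using Kpos q0lt by simp
  have lamK: "lam ^ K = q0" unfolding lam_def using Kpos q0pos by (simp add: real_root_pow_pos)
  define C where "C = D * c1 / q0"
  have Cpos: "0 < C" unfolding C_def using D1 c1pos q0pos by simp
  have main: "\<forall>A. (\<forall>n\<ge>1. A n \<in> \<A>) \<longrightarrow>
              (\<exists>B. (\<forall>n\<ge>1. B n \<in> \<B>) \<and> (\<forall>n\<ge>1. nrm (prodAB A B n) \<le> C * lam ^ n))"
  proof (intro allI impI)
    fix A :: "nat \<Rightarrow> real^'m^'n" assume Av: "\<forall>n\<ge>1. A n \<in> \<A>"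
    define pos where "pos = posf kf A"
    define sA where "sA p = (\<lambda>i. A (p + i))" for p
    have sAv: "\<forall>n\<ge>1. sA p n \<in> \<A>" for p using Av unfolding sA_def by simp
    have kj: "kf (sA p) \<in> {1..K}" for p using f[OF sAv] unfolding kf_def by blast
    have posS: "pos (Suc j) = pos j + kf (sA (pos j))" for j by (simp add: pos_def sA_def)
    have pos0: "pos 0 = 0" by (simp add: pos_def)
    have smono: "strict_mono pos"
      unfolding strict_mono_Suc_iff using posS kj by (metis atLeastAtMost_iff less_add_same_cancel1 less_le_trans zero_less_one)
    have posle: "pos j \<le> j * K" for j
    proof (induction j)
      case 0 then show ?case using pos0 by simp
    next
      case (Suc j) then show ?case using posS[of j] kj[of "pos j"] by simp
    qed
    have posge: "j \<le> pos j" for j using smono by (rule strict_mono_imp_increasing)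
    define J where "J n = (LEAST j. n \<le> pos (Suc j))" for n
    have Jex: "n \<le> pos (Suc (J n))" for n
      unfolding J_def by (rule LeastI[of _ n]) (use posge[of "Suc n"] in simp)
    have Jlow: "pos (J n) < n" if "n \<ge> 1" for n
    proof (cases "J n")
      case 0 then show ?thesis using that pos0 by simp
    next
      case (Suc i)
      then have "\<not> n \<le> pos (Suc i)" unfolding J_def using not_less_Least[of i "\<lambda>j. n \<le> pos (Suc j)"]
        by (metis J_def lessI)
      then show ?thesis using Suc by simp
    qed
    have Juniq: "J n = j" if "pos j < n" "n \<le> pos (Suc j)" for n j
    proof -
      have "J n \<le> j" unfolding J_def using that(2) by (rule Least_le)
      moreover have "\<not> J n < j"
      proof
        assume "J n < j"
        then have "pos (Suc (J n)) \<le> pos j" using smono by (simp add: strict_mono_less_eq)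
        then show False using Jex[of n] that(1) by simp
      qed
      ultimately show ?thesis by simp
    qed
    define B where "B n = Bf (sA (pos (J n))) (n - pos (J n))" for n
    have Bblock: "B (pos j + i) = Bf (sA (pos j)) i" if "i \<in> {1..kf (sA (pos j))}" for j i
    proof -
      have "J (pos j + i) = j" using that posS[of j] by (intro Juniq) auto
      then show ?thesis unfolding B_def by simp
    qed
    have Bv: "\<forall>n\<ge>1. B n \<in> \<B>"
    proof (intro allI impI)
      fix n :: nat assume n: "n \<ge> 1"
      define j where "j = J n"
      have "pos j < n" "n \<le> pos j + kf (sA (pos j))" using Jlow[OF n] Jex[of n] posS[of j]
        unfolding j_def by auto
      then have "n - pos j \<in> {1..kf (sA (pos j))}" by auto
      then have "Bf (sA (pos j)) (n - pos j) \<in> \<B>" using f[OF sAv] unfolding kf_def Bf_def by blast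
      then show "B n \<in> \<B>" unfolding B_def j_def by simp
    qed
    define sB where "sB p = (\<lambda>i. B (p + i))" for p
    have blk: "nrm (prodAB (sA (pos j)) (sB (pos j)) (kf (sA (pos j)))) \<le> q0" for j
    proof -
      have "prodAB (sA (pos j)) (sB (pos j)) (kf (sA (pos j)))
          = prodAB (sA (pos j)) (Bf (sA (pos j))) (kf (sA (pos j)))"
        using Bblock unfolding sB_def by (intro prodAB_cong) auto
      then show ?thesis using f[OF sAv] unfolding kf_def Bf_def by simp
    qed
    have ind: "nrm (prodAB A B (pos j)) \<le> c1 * q0 ^ j" for j
    proof (induction j)
      case 0 then show ?case using pos0 by (simp add: c1_def)
    next
      case (Suc j)
      have "prodAB A B (pos (Suc j)) = prodAB (sA (pos j)) (sB (pos j)) (kf (sA (pos j))) ** prodAB A B (pos j)"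
        unfolding posS sA_def sB_def by (rule prodAB_add)
      then have "nrm (prodAB A B (pos (Suc j))) \<le> nrm (prodAB (sA (pos j)) (sB (pos j)) (kf (sA (pos j)))) * nrm (prodAB A B (pos j))"
        using sub by simp
      also have "\<dots> \<le> q0 * (c1 * q0 ^ j)"
        using blk[of j] Suc.IH nm(1) q0pos by (intro mult_mono) auto
      finally show ?case by (simp add: algebra_simps)
    qed
    show "\<exists>B. (\<forall>n\<ge>1. B n \<in> \<B>) \<and> (\<forall>n\<ge>1. nrm (prodAB A B n) \<le> C * lam ^ n)"
    proof (intro exI[of _ B] conjI Bv allI impI)
      fix n :: nat assume n: "n \<ge> 1"
      define j where "j = J n"
      define r where "r = n - pos j"
      have pj: "pos j < n" "n \<le> pos j + kf (sA (pos j))" using Jlow[OF n] Jex[of n] posS[of j]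
        unfolding j_def by auto
      have nr: "n = pos j + r" using pj unfolding r_def by simp
      have rK: "r \<le> K" using pj kj[of "pos j"] unfolding r_def by auto
      have eq: "prodAB A B n = prodAB (sA (pos j)) (sB (pos j)) r ** prodAB A B (pos j)"
        unfolding nr sA_def sB_def by (rule prodAB_add)
      have "prodAB (sA (pos j)) (sB (pos j)) r \<in> PP"
        using rK Av Bv unfolding sA_def sB_def by (intro inPP) auto
      then have part: "nrm (prodAB (sA (pos j)) (sB (pos j)) r) \<le> D" by (rule Dub)
      have "nrm (prodAB A B n) \<le> nrm (prodAB (sA (pos j)) (sB (pos j)) r) * nrm (prodAB A B (pos j))"
        unfolding eq by (rule sub)
      also have "\<dots> \<le> D * (c1 * q0 ^ j)"
        using part ind[of j] nm(1) D1 by (intro mult_mono) auto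
      finally have b1: "nrm (prodAB A B n) \<le> D * (c1 * q0 ^ j)" .
      have "n \<le> Suc j * K" using pj posS[of j] posle[of "Suc j"] by simp
      then have "lam ^ (Suc j * K) \<le> lam ^ n" using lampos lamlt
        by (intro power_decreasing) auto
      moreover have "lam ^ (Suc j * K) = q0 ^ j * q0"
      proof -
        have "lam ^ (Suc j * K) = (lam ^ K) ^ Suc j" by (metis mult.commute power_mult)
        then show ?thesis using lamK by simp
      qed
      ultimately have "q0 ^ j * q0 \<le> lam ^ n" by simp
      then have "q0 ^ j \<le> lam ^ n / q0" using q0pos by (simp add: field_simps)
      then have "D * (c1 * q0 ^ j) \<le> D * (c1 * (lam ^ n / q0))"
        using D1 c1pos by (intro mult_left_mono) auto
      also have "\<dots> = C * lam ^ n" unfolding C_def by (simp add: field_simps)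
      finally show "nrm (prodAB A B n) \<le> C * lam ^ n" using b1 by linarith
    qed
  qed
  show ?thesis using main Cpos lampos lamlt by blast
qed

end
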